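(* In the setting of the $i$-th horizontal composition of $\phi$ (with $n$ variables) and $\psi$ (with $m$ variables, dinatural in its $i$-th variable), let $k\in n$. Then $\phi\ast_i\psi$ is dinatural in its $(i-1+k)$-th variable if and only if, for all choices of objects $B_1,\dots,B_{i-1},A_1,\dots,A_{k-1},A_{k+1},\dots,A_n,B_{i+1},\dots,B_m$ of $\mathbb C$ (used to form the focalisations $\bar\phi^k$ and $\bar\psi^i$), the classical horizontal composite $\bar\phi^k\ast\bar\psi^i$ is dinatural in its only variable.
   Context: Notation: $k$ also denotes $\{1,\dots,k\}$; $\mathbb C^\alpha=\mathbb C^{\alpha_1}\times\cdots$ with $\mathbb C^+=\mathbb C$, $\mathbb C^-=\mathbb C^{op}$; for $\mathbf A=(A_1,\dots,A_n)$, $\sigma\colon k\to n$, $\mathbf A\sigma=(A_{\sigma1},\dots,A_{\sigma k})$; a morphism in a contravariant argument is read in $\mathbb C^{op}$. A transformation $\phi\colon F\to G$ ($F\colon\mathbb C^\alpha\to\mathbb C$, $G\colon\mathbb C^\beta\to\mathbb C$) of type $|\alpha|\xrightarrow{\sigma}n\xleftarrow{\tau}|\beta|$ is a family $\phi_{\mathbf A}\colon F(\mathbf A\sigma)\to G(\mathbf A\tau)$, $\mathbf A\in\mathrm{Ob}(\mathbb C)^n$. $\mathbf A[X,Y/i]\sigma$ is the tuple whose $j$-th entry is $X$ if $\sigma j=i,\alpha_j=-$, $Y$ if $\sigma j=i,\alpha_j=+$, $A_{\sigma j}$ (or $1_{A_{\sigma j}}$ for morphisms) otherwise; $\mathbf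 A[X/i]=\mathbf A[X,X/i]$. $\phi$ is dinatural in its $i$-th variable if for all $A_j$ ($j\ne i$) and $f\colon A\to B$: $G(\mathbf A[A,f/i]\tau)\circ\phi_{\mathbf A[A/i]}\circ F(\mathbf A[f,A/i]\sigma)=G(\mathbf A[f,B/i]\tau)\circ\phi_{\mathbf A[B/i]}\circ F(\mathbf A[B,f/i]\sigma)$. Focalisation: for $\varphi\colon T\to S$ of type $|\alpha|\xrightarrow{\sigma}p\xleftarrow{\tau}|\beta|$ and fixed objects $A_j$ ($j\ne k$), $\bar T^k,\bar S^k\colon\mathbb C^{op}\times\mathbb C\to\mathbb C$ are $\bar T^k(X,Y)=T(\mathbf A[X,Y/k]\sigma)$, $\bar S^k(X,Y)=S(\mathbf A[X,Y/k]\tau)$ (also on morphisms), and $\bar\varphi^k\colon\bar T^k\to\bar S^k$ is the transformation of type $2\to1\leftarrow2$ with $\bar\varphi^k_X=\varphi_{\mathbf A[X/k]}$. Classical horizontal composite: for $\phi\colon F\to G$ and $\psi\colon H\to K$ of type $2\to1\leftarrow2$ with $F,G,H,K\colon\mathbb C^{op}\times\mathbb C\to\mathbb C$ and $\psi$ dinatural, $\phi\ast\psi\colon H(G^{op},F)\to K(F^{op},G)$ is the transformation of type $4\to1\leftarrow4$ between the functors $\mathbb C^{[+,-,-,+]}\to\mathbb C$, $(A,B,C,D)\mapsto H(G(A,B),F(C,D))$ and $(A,B,C,D)\mapsto K(F(A,B),G(C,D))$, with components $(\phi\ast\psi)_A=K(1,\phi_A)\circ\psi_{F(A,A)}\circ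 H(\phi_A,1)$. General $i$-th horizontal composition: let $F\colon\mathbb C^\alpha\to\mathbb C$, $G\colon\mathbb C^\beta\to\mathbb C$, $H\colon\mathbb C^\gamma\to\mathbb C$, $K\colon\mathbb C^\delta\to\mathbb C$, $\phi\colon F\to G$ of type $|\alpha|\xrightarrow{\sigma}n\xleftarrow{\tau}|\beta|$ with variables $\mathbf A=(A_1,\dots,A_n)$, and $\psi\colon H\to K$ of type $|\gamma|\xrightarrow{\eta}m\xleftarrow{\theta}|\delta|$ with variables $\mathbf B=(B_1,\dots,B_m)$, dinatural in its $i$-th variable. $\phi\ast_i\psi$ has variables $(B_1,\dots,B_{i-1},A_1,\dots,A_n,B_{i+1},\dots,B_m)$. Its domain functor is obtained from $H$ by substituting into each argument position $u$ with $\eta u=i$ the functor $F$ if $\gamma_u=+$ and $G^{op}$ if $\gamma_u=-$; its codomain from $K$ by substituting into each position $v$ with $\theta v=i$ the functor $G$ if $\delta_v=+$ and $F^{op}$ if $\delta_v=-$. In its type, an argument coming from the $j$-th argument of a copy of $F$ has variable $A_{\sigma j}$, from a copy of $G$ variable $A_{\tau j}$, and unchanged positions $u$ of $H$ (resp. $v$ of $K$) variable $B_{\eta u}$ (resp. $B_{\theta v}$). Its component at $\mathbf B[\mathbf A/i]$ is $K(\mathbf B[F(\mathbf A\sigma),\phi_{\mathbf A}/i]\theta)\circ\psi_{\mathbf B[F(\mathbf A\sigma)/i]}\circ H(\mathbf B[\phi_{\mathbf A},F(\mathbf A\sigma)/i]\eta)$. *)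

theory Defs
  imports Main
begin

text \<open>A (single) category with objects of type 'o and morphisms of type 'm.
  Comp g f is the composite g after f.\<close>

record ('o, 'm) category =
  Ob :: "'o set"
  Hom :: "'o \<Rightarrow> 'o \<Rightarrow> 'm set"
  Id :: "'o \<Rightarrow> 'm"
  Comp :: "'m \<Rightarrow> 'm \<Rightarrow> 'm"

definition is_category :: "('o, 'm) category \<Rightarrow> bool" where
  "is_category C \<longleftrightarrow>
     (\<forall>a b f. f \<in> Hom C a b \<longrightarrow> a \<in> Ob C \<and> b \<in> Ob C) \<and>
     (\<forall>a \<in> Ob C. Id C a \<in> Hom C a a) \<and>
     (\<forall>a b c f g. f \<in> Hom C a b \<and> g \<in> Hom C b c \<longrightarrow> Comp C g f \<in> Hom C a c) \<and>
     (\<forall>a b f. f \<in> Hom C a b \<longrightarrow> Comp C f (Id C a) = f \<and> Comp C (Id C b) f = f) \<and>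
     (\<forall>a b c d f g h. f \<in> Hom C a b \<and> g \<in> Hom C b c \<and> h \<in> Hom C c d \<longrightarrow>
        Comp C h (Comp C g f) = Comp C (Comp C h g) f)"

text \<open>Tuples of objects of length n (indices are 0-based throughout).\<close>

definition obs :: "('o, 'm) category \<Rightarrow> nat \<Rightarrow> 'o list set" where
  "obs C n = {A. length A = n \<and> set A \<subseteq> Ob C}"

text \<open>A variance list alpha: True means + (covariant, C), False means - (C^op).\<close>

definition mhom :: "('o, 'm) category \<Rightarrow> bool list \<Rightarrow> 'o list \<Rightarrow> 'o list \<Rightarrow> 'm list set" where
  "mhom C \<alpha> A B = {fs. length fs = length \<alpha> \<and>
     (\<forall>j < length \<alpha>. fs ! j \<in> (if \<alpha> ! j then Hom C (A ! j) (B ! j) else Hom C (B ! j) (A ! j)))}"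

definition mcomp :: "('o, 'm) category \<Rightarrow> bool list \<Rightarrow> 'm list \<Rightarrow> 'm list \<Rightarrow> 'm list" where
  "mcomp C \<alpha> gs fs = map (\<lambda>j. if \<alpha> ! j then Comp C (gs ! j) (fs ! j) else Comp C (fs ! j) (gs ! j))
     [0..<length \<alpha>]"

definition mvfunctor ::
  "('o, 'm) category \<Rightarrow> bool list \<Rightarrow> ('o list \<Rightarrow> 'o) \<Rightarrow> ('m list \<Rightarrow> 'm) \<Rightarrow> bool" where
  "mvfunctor C \<alpha> Fo Fm \<longleftrightarrow>
     (\<forall>A \<in> obs C (length \<alpha>). Fo A \<in> Ob C) \<and>
     (\<forall>A \<in> obs C (length \<alpha>). \<forall>B \<in> obs C (length \<alpha>). \<forall>fs \<in> mhom C \<alpha> A B.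
        Fm fs \<in> Hom C (Fo A) (Fo B)) \<and>
     (\<forall>A \<in> obs C (length \<alpha>). Fm (map (Id C) A) = Id C (Fo A)) \<and>
     (\<forall>A \<in> obs C (length \<alpha>). \<forall>B \<in> obs C (length \<alpha>). \<forall>D \<in> obs C (length \<alpha>).
        \<forall>fs \<in> mhom C \<alpha> A B. \<forall>gs \<in> mhom C \<alpha> B D.
        Fm (mcomp C \<alpha> gs fs) = Comp C (Fm gs) (Fm fs))"

definition reidx :: "'a list \<Rightarrow> nat list \<Rightarrow> 'a list" where
  "reidx A \<sigma> = map (\<lambda>j. A ! j) \<sigma>"

definition is_transf ::
  "('o, 'm) category \<Rightarrow> nat \<Rightarrow> bool list \<Rightarrow> nat list \<Rightarrow> ('o list \<Rightarrow> 'o)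
   \<Rightarrow> bool list \<Rightarrow> nat list \<Rightarrow> ('o list \<Rightarrow> 'o) \<Rightarrow> ('o list \<Rightarrow> 'm) \<Rightarrow> bool" where
  "is_transf C n \<alpha> \<sigma> Fo \<beta> \<tau> Go \<phi> \<longleftrightarrow>
     length \<sigma> = length \<alpha> \<and> length \<tau> = length \<beta> \<and>
     set \<sigma> \<subseteq> {..<n} \<and> set \<tau> \<subseteq> {..<n} \<and>
     (\<forall>A \<in> obs C n. \<phi> A \<in> Hom C (Fo (reidx A \<sigma>)) (Go (reidx A \<tau>)))"

text \<open>For morphisms one passes the list of
  identities of A.\<close>

definition subst :: "'a list \<Rightarrow> 'a \<Rightarrow> 'a \<Rightarrow> nat \<Rightarrow> nat list \<Rightarrow> bool list \<Rightarrow> 'a list" where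
  "subst A X Y i \<sigma> \<alpha> =
     map (\<lambda>j. if \<sigma> ! j = i then (if \<alpha> ! j then Y else X) else A ! (\<sigma> ! j)) [0..<length \<sigma>]"

definition dinatural ::
  "('o, 'm) category \<Rightarrow> nat \<Rightarrow> bool list \<Rightarrow> nat list \<Rightarrow> ('m list \<Rightarrow> 'm)
   \<Rightarrow> bool list \<Rightarrow> nat list \<Rightarrow> ('m list \<Rightarrow> 'm) \<Rightarrow> ('o list \<Rightarrow> 'm) \<Rightarrow> nat \<Rightarrow> bool" where
  "dinatural C n \<alpha> \<sigma> Fm \<beta> \<tau> Gm \<phi> i \<longleftrightarrow>
     (\<forall>A \<in> obs C n. \<forall>a \<in> Ob C. \<forall>b \<in> Ob C. \<forall>f \<in> Hom C a b.
        Comp C (Gm (subst (map (Id C) A) (Id C a) f i \<tau> \<beta>))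
          (Comp C (\<phi> (A[i := a])) (Fm (subst (map (Id C) A) f (Id C a) i \<sigma> \<alpha>)))
      = Comp C (Gm (subst (map (Id C) A) f (Id C b) i \<tau> \<beta>))
          (Comp C (\<phi> (A[i := b])) (Fm (subst (map (Id C) A) (Id C b) f i \<sigma> \<alpha>))))"

definition foc_o :: "('o list \<Rightarrow> 'o) \<Rightarrow> bool list \<Rightarrow> nat list \<Rightarrow> 'o list \<Rightarrow> nat \<Rightarrow> 'o list \<Rightarrow> 'o" where
  "foc_o To \<alpha> \<sigma> A k xs = To (subst A (xs ! 0) (xs ! 1) k \<sigma> \<alpha>)"

definition foc_m :: "('o, 'm) category \<Rightarrow> ('m list \<Rightarrow> 'm) \<Rightarrow> bool list \<Rightarrow> nat list \<Rightarrow> 'o list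
   \<Rightarrow> nat \<Rightarrow> 'm list \<Rightarrow> 'm" where
  "foc_m C Tm \<alpha> \<sigma> A k fs = Tm (subst (map (Id C) A) (fs ! 0) (fs ! 1) k \<sigma> \<alpha>)"

definition foc_t :: "('o list \<Rightarrow> 'm) \<Rightarrow> 'o list \<Rightarrow> nat \<Rightarrow> 'o list \<Rightarrow> 'm" where
  "foc_t \<phi> A k xs = \<phi> (A[k := xs ! 0])"

text \<open>Domain H(G^op,F): (A,B,C,D) \<mapsto> H(G(A,B),F(C,D)); codomain
  K(F^op,G): (A,B,C,D) \<mapsto> K(F(A,B),G(C,D)), both with variance [+,-,-,+].\<close>

definition cl_var :: "bool list" where
  "cl_var = [True, False, False, True]"

definition cl_ty :: "nat list" where
  "cl_ty = [0, 0, 0, 0]"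

definition cl_dom_m :: "('m list \<Rightarrow> 'm) \<Rightarrow> ('m list \<Rightarrow> 'm) \<Rightarrow> ('m list \<Rightarrow> 'm) \<Rightarrow> 'm list \<Rightarrow> 'm" where
  "cl_dom_m Fm Gm Hm fs = Hm [Gm [fs ! 0, fs ! 1], Fm [fs ! 2, fs ! 3]]"

definition cl_cod_m :: "('m list \<Rightarrow> 'm) \<Rightarrow> ('m list \<Rightarrow> 'm) \<Rightarrow> ('m list \<Rightarrow> 'm) \<Rightarrow> 'm list \<Rightarrow> 'm" where
  "cl_cod_m Fm Gm Km fs = Km [Fm [fs ! 0, fs ! 1], Gm [fs ! 2, fs ! 3]]"

definition cl_comp :: "('o, 'm) category \<Rightarrow> ('o list \<Rightarrow> 'o) \<Rightarrow> ('o list \<Rightarrow> 'm) \<Rightarrow> ('o list \<Rightarrow> 'm)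
   \<Rightarrow> ('m list \<Rightarrow> 'm) \<Rightarrow> ('m list \<Rightarrow> 'm) \<Rightarrow> 'o list \<Rightarrow> 'm" where
  "cl_comp C Fo \<phi> \<psi> Hm Km A =
     (let a = A ! 0; x = Fo [a, a] in
      Comp C (Km [Id C x, \<phi> [a]]) (Comp C (\<psi> [x]) (Hm [\<phi> [a], Id C x])))"

fun split_by :: "nat list \<Rightarrow> 'a list \<Rightarrow> 'a list list" where
  "split_by [] xs = []"
| "split_by (l # ls) xs = take l xs # split_by ls (drop l xs)"

text \<open>Substitution of functors into the argument positions u of an outer functor
  (variance \<gamma>, type \<eta>) with \<eta> u = i: P is plugged into covariant positions
  and Q into contravariant ones (the latter as Q^op); other positions stay.\<close>

definition plug_lens :: "bool list \<Rightarrow> nat list \<Rightarrow> nat \<Rightarrow> nat \<Rightarrow> nat \<Rightarrow> nat list" where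
  "plug_lens \<gamma> \<eta> i lp lq =
     map (\<lambda>u. if \<eta> ! u = i then (if \<gamma> ! u then lp else lq) else 1) [0..<length \<gamma>]"

definition plug_m :: "bool list \<Rightarrow> nat list \<Rightarrow> nat \<Rightarrow> nat \<Rightarrow> nat
   \<Rightarrow> ('a list \<Rightarrow> 'a) \<Rightarrow> ('a list \<Rightarrow> 'a) \<Rightarrow> ('a list \<Rightarrow> 'a) \<Rightarrow> 'a list \<Rightarrow> 'a" where
  "plug_m \<gamma> \<eta> i lp lq Outer P Q xs =
     (let cs = split_by (plug_lens \<gamma> \<eta> i lp lq) xs in
      Outer (map (\<lambda>u. if \<eta> ! u = i then (if \<gamma> ! u then P (cs ! u) else Q (cs ! u))
                       else hd (cs ! u)) [0..<length \<gamma>]))"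

definition plug_var :: "bool list \<Rightarrow> nat list \<Rightarrow> nat \<Rightarrow> bool list \<Rightarrow> bool list \<Rightarrow> bool list" where
  "plug_var \<gamma> \<eta> i pv qv =
     concat (map (\<lambda>u. if \<eta> ! u = i then (if \<gamma> ! u then pv else map Not qv) else [\<gamma> ! u])
       [0..<length \<gamma>])"

text \<open>Variables of the composite: (B_0..B_{i-1}, A_0..A_{n-1}, B_{i+1}..B_{m-1}).\<close>

definition outer_idx :: "nat \<Rightarrow> nat \<Rightarrow> nat \<Rightarrow> nat" where
  "outer_idx i n v = (if v < i then v else v - 1 + n)"

definition plug_ty :: "bool list \<Rightarrow> nat list \<Rightarrow> nat \<Rightarrow> nat \<Rightarrow> nat list \<Rightarrow> nat list \<Rightarrow> nat list" where
  "plug_ty \<gamma> \<eta> i n pt qt =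
     concat (map (\<lambda>u. if \<eta> ! u = i then (if \<gamma> ! u then map ((+) i) pt else map ((+) i) qt)
                      else [outer_idx i n (\<eta> ! u)]) [0..<length \<gamma>])"

text \<open>Components: at \<open>B[A/i]\<close>,
  \<open>K(B[F(A\<sigma>),\<phi>_A/i]\<theta>) \<circ> \<psi>_{B[F(A\<sigma>)/i]} \<circ> H(B[\<phi>_A,F(A\<sigma>)/i]\<eta>)\<close>.\<close>

definition hcomp :: "('o, 'm) category \<Rightarrow> nat \<Rightarrow> nat \<Rightarrow> nat list \<Rightarrow> ('o list \<Rightarrow> 'o)
   \<Rightarrow> ('o list \<Rightarrow> 'm) \<Rightarrow> bool list \<Rightarrow> nat list \<Rightarrow> ('m list \<Rightarrow> 'm)
   \<Rightarrow> bool list \<Rightarrow> nat list \<Rightarrow> ('m list \<Rightarrow> 'm) \<Rightarrow> ('o list \<Rightarrow> 'm) \<Rightarrow> 'o list \<Rightarrow> 'm" where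
  "hcomp C i n \<sigma> Fo \<phi> \<gamma> \<eta> Hm \<delta> \<theta> Km \<psi> Cs =
     (let A = take n (drop i Cs);
          x = Fo (reidx A \<sigma>);
          B = take i Cs @ [x] @ drop (i + n) Cs in
      Comp C (Km (subst (map (Id C) B) (Id C x) (\<phi> A) i \<theta> \<delta>))
        (Comp C (\<psi> B) (Hm (subst (map (Id C) B) (\<phi> A) (Id C x) i \<eta> \<gamma>))))"

end

theory Submission
  imports Defs
begin

lemma subst_map:
  "length ty = length var \<Longrightarrow> subst Ds X Y j ty var =
     map (\<lambda>(t,v). if t = j then (if v then Y else X) else Ds ! t) (zip ty var)"
  unfolding subst_def by (rule nth_equalityI) auto

lemma zip_concat_map:
  "(\<forall>u\<in>set xs. length (f u) = length (g u)) \<Longrightarrow>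
   zip (concat (map f xs)) (concat (map g xs)) = concat (map (\<lambda>u. zip (f u) (g u)) xs)"
  by (induction xs) (auto simp: zip_append)

lemma split_by_concat:
  "(\<forall>u\<in>set xs. length (h u) = l u) \<Longrightarrow> split_by (map l xs) (concat (map h xs)) = map h xs"
  by (induction xs) auto

lemma subst_update_same:
  "subst (Ds[i:=z]) X Y i ty var = subst Ds X Y i ty var"
  by (simp add: subst_def nth_list_update)

lemma subst_reidx:
  "length \<sigma> = length \<alpha> \<Longrightarrow> set \<sigma> \<subseteq> {..<length A} \<Longrightarrow> subst A c c k \<sigma> \<alpha> = reidx (A[k:=c]) \<sigma>"
  unfolding subst_def reidx_def
proof (rule nth_equalityI)
  fix j assume s: "set \<sigma> \<subseteq> {..<length A}" and j: "j < length (map (\<lambda>j. if \<sigma> ! j = k then if \<alpha> ! j then c else c else A ! (\<sigma> ! j)) [0..<length \<sigma>])"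
  then have "\<sigma> ! j < length A" using nth_mem by fastforce
  then show "map (\<lambda>j. if \<sigma> ! j = k then if \<alpha> ! j then c else c else A ! (\<sigma> ! j)) [0..<length \<sigma>] ! j = map ((!) (A[k := c])) \<sigma> ! j"
    using j by (simp add: nth_list_update)
qed simp

lemma plug_subst:
  assumes "length \<eta> = length \<gamma>" "set \<eta> \<subseteq> {..<m}" "length \<sigma> = length pv" "length \<tau> = length qv"
    "set \<sigma> \<subseteq> {..<n}" "set \<tau> \<subseteq> {..<n}" "k < n" "i < m"
    "\<forall>t<n. DA ! t = Ds ! (i + t)" "\<forall>v<m. v \<noteq> i \<longrightarrow> DB ! v = Ds ! (outer_idx i n v)"
  shows "plug_m \<gamma> \<eta> i (length \<sigma>) (length \<tau>) Outer P Q
      (subst Ds X Y (i+k) (plug_ty \<gamma> \<eta> i n \<sigma> \<tau>) (plug_var \<gamma> \<eta> i pv qv))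
    = Outer (subst DB (Q (subst DA Y X k \<tau> qv)) (P (subst DA X Y k \<sigma> pv)) i \<eta> \<gamma>)"
proof -
  define s where "s = (\<lambda>(t,v). if t = i + k then (if v then Y else X) else Ds ! t)"
  define f where "f = (\<lambda>u. if \<eta> ! u = i then (if \<gamma> ! u then map ((+) i) \<sigma> else map ((+) i) \<tau>)
                      else [outer_idx i n (\<eta> ! u)])"
  define g where "g = (\<lambda>u. if \<eta> ! u = i then (if \<gamma> ! u then pv else map Not qv) else [\<gamma> ! u])"
  define l where "l = (\<lambda>u. if \<eta> ! u = i then (if \<gamma> ! u then length \<sigma> else length \<tau>) else 1::nat)"
  have lfg: "\<forall>u\<in>set [0..<length \<gamma>]. length (f u) = length (g u)"
    using assms(3,4) by (auto simp: f_def g_def)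
  have pt: "plug_ty \<gamma> \<eta> i n \<sigma> \<tau> = concat (map f [0..<length \<gamma>])"
    by (simp add: plug_ty_def f_def)
  have pvv: "plug_var \<gamma> \<eta> i pv qv = concat (map g [0..<length \<gamma>])"
    by (simp add: plug_var_def g_def)
  have len: "length (plug_ty \<gamma> \<eta> i n \<sigma> \<tau>) = length (plug_var \<gamma> \<eta> i pv qv)"
  proof -
    have eqm: "map (length \<circ> f) [0..<length \<gamma>] = map (length \<circ> g) [0..<length \<gamma>]"
      using lfg by simp
    show ?thesis unfolding pt pvv length_concat map_map eqm ..
  qed
  have sub: "subst Ds X Y (i+k) (plug_ty \<gamma> \<eta> i n \<sigma> \<tau>) (plug_var \<gamma> \<eta> i pv qv)
     = concat (map (\<lambda>u. map s (zip (f u) (g u))) [0..<length \<gamma>])"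
    unfolding subst_map[OF len] unfolding pt pvv zip_concat_map[OF lfg] s_def
    by (simp add: map_concat comp_def)
  have pl: "plug_lens \<gamma> \<eta> i (length \<sigma>) (length \<tau>) = map l [0..<length \<gamma>]"
    by (simp add: plug_lens_def l_def)
  have ll: "\<forall>u\<in>set [0..<length \<gamma>]. length (map s (zip (f u) (g u))) = l u"
    using assms(3,4) by (auto simp: f_def g_def l_def)
  have cs: "split_by (plug_lens \<gamma> \<eta> i (length \<sigma>) (length \<tau>))
      (subst Ds X Y (i+k) (plug_ty \<gamma> \<eta> i n \<sigma> \<tau>) (plug_var \<gamma> \<eta> i pv qv))
     = map (\<lambda>u. map s (zip (f u) (g u))) [0..<length \<gamma>]"
    unfolding sub pl by (rule split_by_concat[OF ll])
  have Pch: "map s (zip (map ((+) i) \<sigma>) pv) = subst DA X Y k \<sigma> pv"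
    unfolding subst_map[OF assms(3)] zip_map1 map_map
    apply (rule map_cong[OF refl])
    using assms(5,9) by (auto simp: s_def dest!: set_zip_leftD)
  have Qch: "map s (zip (map ((+) i) \<tau>) (map Not qv)) = subst DA Y X k \<tau> qv"
    unfolding subst_map[OF assms(4)] zip_map1 zip_map2 map_map
    apply (rule map_cong[OF refl])
    using assms(6,9) by (auto simp: s_def dest!: set_zip_leftD)
  have oi: "\<And>v. v \<noteq> i \<Longrightarrow> outer_idx i n v \<noteq> i + k"
    using assms(7) by (auto simp: outer_idx_def)
  have sd: "subst DB (Q (subst DA Y X k \<tau> qv)) (P (subst DA X Y k \<sigma> pv)) i \<eta> \<gamma> =
     map (\<lambda>u. if \<eta> ! u = i then (if \<gamma> ! u then P (subst DA X Y k \<sigma> pv) else Q (subst DA Y X k \<tau> qv))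
        else DB ! (\<eta> ! u)) [0..<length \<gamma>]"
    by (simp only: subst_def assms(1))
  show ?thesis
    unfolding plug_m_def Let_def cs sd
    apply (rule arg_cong[where f=Outer])
    apply (rule map_cong[OF refl])
    subgoal for u
    proof -
      assume u: "u \<in> set [0..<length \<gamma>]"
      have uL: "u < length \<gamma>" using u by simp
      then have um: "\<eta> ! u < m" using assms(1,2) by (metis nth_mem subsetD lessThan_iff)
      show ?thesis
      proof (cases "\<eta> ! u = i")
        case True
        then show ?thesis using Pch Qch uL by (simp add: f_def g_def)
      next
        case False
        then show ?thesis using uL um oi[OF False] assms(10)
          by (simp add: f_def g_def s_def)
      qed
    qed
    done
qed


lemma cl_subst: "subst Ds X Y 0 cl_ty cl_var = [Y, X, X, Y]"
  by (simp add: subst_def cl_ty_def cl_var_def upt_rec)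

context
  fixes C :: "('o, 'm) category"
    and \<alpha> \<beta> \<gamma> \<delta> :: "bool list"
    and \<sigma> \<tau> \<eta> \<theta> :: "nat list"
    and Fo :: "'o list \<Rightarrow> 'o"
    and Fm Gm Hm Km :: "'m list \<Rightarrow> 'm"
    and \<phi> \<psi> :: "'o list \<Rightarrow> 'm"
    and n m i k :: nat
    and Cs A B :: "'o list" and z :: 'o
  assumes ls: "length \<sigma> = length \<alpha>" and lt: "length \<tau> = length \<beta>"
    and ss: "set \<sigma> \<subseteq> {..<n}" and st: "set \<tau> \<subseteq> {..<n}"
    and le: "length \<eta> = length \<gamma>" and lth: "length \<theta> = length \<delta>"
    and se: "set \<eta> \<subseteq> {..<m}" and sth: "set \<theta> \<subseteq> {..<m}"
    and i: "i < m" and k: "k < n"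
    and lCs: "length Cs = m - 1 + n"
    and hA: "A = take n (drop i Cs)"
    and hB: "B = take i Cs @ [z] @ drop (i + n) Cs"
begin

lemma lenB: "length B = m" using hB lCs i by auto
lemma lenA: "length A = n" using hA lCs i by auto

lemma DA: "\<forall>t<n. map (Id C) A ! t = map (Id C) Cs ! (i + t)"
  using hA lCs i by auto

lemma DB: "\<forall>v<m. v \<noteq> i \<longrightarrow> map (Id C) B ! v = map (Id C) Cs ! (outer_idx i n v)"
proof (intro allI impI)
  fix v assume v: "v < m" "v \<noteq> i"
  have "B ! v = Cs ! (outer_idx i n v)"
  proof (cases "v < i")
    case True then show ?thesis using hB lCs i by (simp add: nth_append outer_idx_def)
  next
    case False
    then have "v > i" using v by simp
    then show ?thesis using hB lCs i v
      by (auto simp: nth_append outer_idx_def min_def add.commute)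
  qed
  then show "map (Id C) B ! v = map (Id C) Cs ! (outer_idx i n v)"
    using lenB lCs v i by (simp add: outer_idx_def)
qed

lemma core1:
  "plug_m \<gamma> \<eta> i (length \<alpha>) (length \<beta>) Hm Fm Gm
     (subst (map (Id C) Cs) X Y (i + k) (plug_ty \<gamma> \<eta> i n \<sigma> \<tau>) (plug_var \<gamma> \<eta> i \<alpha> \<beta>))
   = cl_dom_m (foc_m C Fm \<alpha> \<sigma> A k) (foc_m C Gm \<beta> \<tau> A k) (foc_m C Hm \<gamma> \<eta> B i)
       (subst Ds X Y 0 cl_ty cl_var)"
  using plug_subst[OF le se ls lt ss st k i DA DB, of Hm Fm Gm X Y]
  by (simp add: cl_subst cl_dom_m_def foc_m_def ls lt)

lemma core2:
  "plug_m \<delta> \<theta> i (length \<beta>) (length \<alpha>) Km Gm Fm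
     (subst (map (Id C) Cs) X Y (i + k) (plug_ty \<delta> \<theta> i n \<tau> \<sigma>) (plug_var \<delta> \<theta> i \<beta> \<alpha>))
   = cl_cod_m (foc_m C Fm \<alpha> \<sigma> A k) (foc_m C Gm \<beta> \<tau> A k) (foc_m C Km \<delta> \<theta> B i)
       (subst Ds X Y 0 cl_ty cl_var)"
  using plug_subst[OF lth sth lt ls st ss k i DA DB, of Km Gm Fm X Y]
  by (simp add: cl_subst cl_cod_m_def foc_m_def ls lt)

lemma core3:
  "hcomp C i n \<sigma> Fo \<phi> \<gamma> \<eta> Hm \<delta> \<theta> Km \<psi> (Cs[i + k := L ! 0])
   = cl_comp C (foc_o Fo \<alpha> \<sigma> A k) (foc_t \<phi> A k) (foc_t \<psi> B i)
       (foc_m C Hm \<gamma> \<eta> B i) (foc_m C Km \<delta> \<theta> B i) L"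
proof -
  let ?c = "L ! 0"
  have t1: "take n (drop i (Cs[i + k := ?c])) = A[k := ?c]"
    using hA lCs i k by (simp add: drop_update_swap take_update_swap)
  have t2: "take i (Cs[i + k := ?c]) = take i Cs" by simp
  have t3: "drop (i + n) (Cs[i + k := ?c]) = drop (i + n) Cs" using k by simp
  have x: "subst A ?c ?c k \<sigma> \<alpha> = reidx (A[k := ?c]) \<sigma>"
    using subst_reidx[OF ls, of A] ss lenA by simp
  define x where "x = Fo (reidx (A[k := ?c]) \<sigma>)"
  have B': "take i Cs @ [x] @ drop (i + n) Cs = B[i := x]"
    using hB lCs i by (simp add: list_update_append)
  have M: "map (Id C) (B[i := x]) = (map (Id C) B)[i := Id C x]" by (simp add: map_update)
  show ?thesis
    unfolding hcomp_def cl_comp_def Let_def foc_o_def foc_t_def foc_m_def t1 t2 t3 x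
    unfolding x_def[symmetric] B' M subst_update_same
    by (simp add: x x_def)
qed

end


theorem mainTheorem11:
  fixes C :: "('o, 'm) category"
    and \<alpha> \<beta> \<gamma> \<delta> :: "bool list"
    and \<sigma> \<tau> \<eta> \<theta> :: "nat list"
    and Fo Go Ho Ko :: "'o list \<Rightarrow> 'o"
    and Fm Gm Hm Km :: "'m list \<Rightarrow> 'm"
    and \<phi> \<psi> :: "'o list \<Rightarrow> 'm"
    and n m i k :: nat
  assumes cat: "is_category C"
    and F: "mvfunctor C \<alpha> Fo Fm" and G: "mvfunctor C \<beta> Go Gm"
    and H: "mvfunctor C \<gamma> Ho Hm" and K: "mvfunctor C \<delta> Ko Km"
    and phi: "is_transf C n \<alpha> \<sigma> Fo \<beta> \<tau> Go \<phi>"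
    and psi: "is_transf C m \<gamma> \<eta> Ho \<delta> \<theta> Ko \<psi>"
    and i: "i < m"
    and psi_din: "dinatural C m \<gamma> \<eta> Hm \<delta> \<theta> Km \<psi> i"
    and k: "k < n"
  shows "dinatural C (m - 1 + n)
           (plug_var \<gamma> \<eta> i \<alpha> \<beta>) (plug_ty \<gamma> \<eta> i n \<sigma> \<tau>)
           (plug_m \<gamma> \<eta> i (length \<alpha>) (length \<beta>) Hm Fm Gm)
           (plug_var \<delta> \<theta> i \<beta> \<alpha>) (plug_ty \<delta> \<theta> i n \<tau> \<sigma>)
           (plug_m \<delta> \<theta> i (length \<beta>) (length \<alpha>) Km Gm Fm)
           (hcomp C i n \<sigma> Fo \<phi> \<gamma> \<eta> Hm \<delta> \<theta> Km \<psi>) (i + k)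
         \<longleftrightarrow>
         (\<forall>A \<in> obs C n. \<forall>B \<in> obs C m.
            dinatural C 1
              cl_var cl_ty
              (cl_dom_m (foc_m C Fm \<alpha> \<sigma> A k) (foc_m C Gm \<beta> \<tau> A k) (foc_m C Hm \<gamma> \<eta> B i))
              cl_var cl_ty
              (cl_cod_m (foc_m C Fm \<alpha> \<sigma> A k) (foc_m C Gm \<beta> \<tau> A k) (foc_m C Km \<delta> \<theta> B i))
              (cl_comp C (foc_o Fo \<alpha> \<sigma> A k) (foc_t \<phi> A k) (foc_t \<psi> B i)
                 (foc_m C Hm \<gamma> \<eta> B i) (foc_m C Km \<delta> \<theta> B i))
              0)"
  proof -
  have ls: "length \<sigma> = length \<alpha>" and lt: "length \<tau> = length \<beta>"
    and ss: "set \<sigma> \<subseteq> {..<n}" and st: "set \<tau> \<subseteq> {..<n}"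
    using phi by (auto simp: is_transf_def)
  have le: "length \<eta> = length \<gamma>" and lth: "length \<theta> = length \<delta>"
    and se: "set \<eta> \<subseteq> {..<m}" and sth: "set \<theta> \<subseteq> {..<m}"
    using psi by (auto simp: is_transf_def)
  note cores = core1[OF ls lt ss st le lth se sth i k] core2[OF ls lt ss st le lth se sth i k]
    core3[OF ls lt ss st le lth se sth i k]
  show ?thesis
  proof
    assume L: "dinatural C (m - 1 + n)
           (plug_var \<gamma> \<eta> i \<alpha> \<beta>) (plug_ty \<gamma> \<eta> i n \<sigma> \<tau>)
           (plug_m \<gamma> \<eta> i (length \<alpha>) (length \<beta>) Hm Fm Gm)
           (plug_var \<delta> \<theta> i \<beta> \<alpha>) (plug_ty \<delta> \<theta> i n \<tau> \<sigma>)
           (plug_m \<delta> \<theta> i (length \<beta>) (length \<alpha>) Km Gm Fm)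
           (hcomp C i n \<sigma> Fo \<phi> \<gamma> \<eta> Hm \<delta> \<theta> Km \<psi>) (i + k)"
    show "\<forall>A \<in> obs C n. \<forall>B \<in> obs C m.
            dinatural C 1
              cl_var cl_ty
              (cl_dom_m (foc_m C Fm \<alpha> \<sigma> A k) (foc_m C Gm \<beta> \<tau> A k) (foc_m C Hm \<gamma> \<eta> B i))
              cl_var cl_ty
              (cl_cod_m (foc_m C Fm \<alpha> \<sigma> A k) (foc_m C Gm \<beta> \<tau> A k) (foc_m C Km \<delta> \<theta> B i))
              (cl_comp C (foc_o Fo \<alpha> \<sigma> A k) (foc_t \<phi> A k) (foc_t \<psi> B i)
                 (foc_m C Hm \<gamma> \<eta> B i) (foc_m C Km \<delta> \<theta> B i))
              0"
    proof (intro ballI)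
      fix A B assume A: "A \<in> obs C n" and B: "B \<in> obs C m"
      define Cs where "Cs = take i B @ A @ drop (Suc i) B"
      have lA: "length A = n" using A by (simp add: obs_def)
      have lB: "length B = m" using B by (simp add: obs_def)
      have Cs: "Cs \<in> obs C (m - 1 + n)"
        using A B i unfolding Cs_def obs_def
        by (auto dest: in_set_takeD in_set_dropD)
      have lCs: "length Cs = m - 1 + n" using Cs by (simp add: obs_def)
      have hA: "A = take n (drop i Cs)" using lA lB i by (simp add: Cs_def)
      have hB: "B = take i Cs @ [B ! i] @ drop (i + n) Cs"
        using lA lB i by (simp add: Cs_def id_take_nth_drop)
      note c = cores[OF lCs hA hB]
      show "dinatural C 1
              cl_var cl_ty
              (cl_dom_m (foc_m C Fm \<alpha> \<sigma> A k) (foc_m C Gm \<beta> \<tau> A k) (foc_m C Hm \<gamma> \<eta> B i))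
              cl_var cl_ty
              (cl_cod_m (foc_m C Fm \<alpha> \<sigma> A k) (foc_m C Gm \<beta> \<tau> A k) (foc_m C Km \<delta> \<theta> B i))
              (cl_comp C (foc_o Fo \<alpha> \<sigma> A k) (foc_t \<phi> A k) (foc_t \<psi> B i)
                 (foc_m C Hm \<gamma> \<eta> B i) (foc_m C Km \<delta> \<theta> B i))
              0"
        unfolding dinatural_def
      proof (intro ballI)
        fix A1 a b f assume A1: "A1 \<in> obs C 1" and a: "a \<in> Ob C" and b: "b \<in> Ob C" and f: "f \<in> Hom C a b"
        have l1: "length A1 = 1" using A1 by (simp add: obs_def)
        have ua: "A1[0 := a] ! 0 = a" and ub: "A1[0 := b] ! 0 = b" using l1 by auto
        note eq = L[unfolded dinatural_def, rule_format, OF Cs a b f]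
        show "Comp C (cl_cod_m (foc_m C Fm \<alpha> \<sigma> A k) (foc_m C Gm \<beta> \<tau> A k) (foc_m C Km \<delta> \<theta> B i)
                 (subst (map (Id C) A1) (Id C a) f 0 cl_ty cl_var))
               (Comp C (cl_comp C (foc_o Fo \<alpha> \<sigma> A k) (foc_t \<phi> A k) (foc_t \<psi> B i)
                 (foc_m C Hm \<gamma> \<eta> B i) (foc_m C Km \<delta> \<theta> B i) (A1[0 := a]))
                 (cl_dom_m (foc_m C Fm \<alpha> \<sigma> A k) (foc_m C Gm \<beta> \<tau> A k) (foc_m C Hm \<gamma> \<eta> B i)
                   (subst (map (Id C) A1) f (Id C a) 0 cl_ty cl_var))) =
              Comp C (cl_cod_m (foc_m C Fm \<alpha> \<sigma> A k) (foc_m C Gm \<beta> \<tau> A k) (foc_m C Km \<delta> \<theta> B i)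
                 (subst (map (Id C) A1) f (Id C b) 0 cl_ty cl_var))
               (Comp C (cl_comp C (foc_o Fo \<alpha> \<sigma> A k) (foc_t \<phi> A k) (foc_t \<psi> B i)
                 (foc_m C Hm \<gamma> \<eta> B i) (foc_m C Km \<delta> \<theta> B i) (A1[0 := b]))
                 (cl_dom_m (foc_m C Fm \<alpha> \<sigma> A k) (foc_m C Gm \<beta> \<tau> A k) (foc_m C Hm \<gamma> \<eta> B i)
                   (subst (map (Id C) A1) (Id C b) f 0 cl_ty cl_var)))"
          using eq
          unfolding c(1)[where Ds="map (Id C) A1"] c(2)[where Ds="map (Id C) A1"]
            c(3)[where L="A1[0 := a]", symmetric] c(3)[where L="A1[0 := b]", symmetric] ua ub
          by simp
      qed
    qed
  next
    assume R: "\<forall>A \<in> obs C n. \<forall>B \<in> obs C m.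
            dinatural C 1
              cl_var cl_ty
              (cl_dom_m (foc_m C Fm \<alpha> \<sigma> A k) (foc_m C Gm \<beta> \<tau> A k) (foc_m C Hm \<gamma> \<eta> B i))
              cl_var cl_ty
              (cl_cod_m (foc_m C Fm \<alpha> \<sigma> A k) (foc_m C Gm \<beta> \<tau> A k) (foc_m C Km \<delta> \<theta> B i))
              (cl_comp C (foc_o Fo \<alpha> \<sigma> A k) (foc_t \<phi> A k) (foc_t \<psi> B i)
                 (foc_m C Hm \<gamma> \<eta> B i) (foc_m C Km \<delta> \<theta> B i))
              0"
    show "dinatural C (m - 1 + n)
           (plug_var \<gamma> \<eta> i \<alpha> \<beta>) (plug_ty \<gamma> \<eta> i n \<sigma> \<tau>)
           (plug_m \<gamma> \<eta> i (length \<alpha>) (length \<beta>) Hm Fm Gm)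
           (plug_var \<delta> \<theta> i \<beta> \<alpha>) (plug_ty \<delta> \<theta> i n \<tau> \<sigma>)
           (plug_m \<delta> \<theta> i (length \<beta>) (length \<alpha>) Km Gm Fm)
           (hcomp C i n \<sigma> Fo \<phi> \<gamma> \<eta> Hm \<delta> \<theta> Km \<psi>) (i + k)"
      unfolding dinatural_def
    proof (intro ballI)
      fix Cs a b f assume Cs: "Cs \<in> obs C (m - 1 + n)" and a: "a \<in> Ob C" and b: "b \<in> Ob C"
        and f: "f \<in> Hom C a b"
      have lCs: "length Cs = m - 1 + n" using Cs by (simp add: obs_def)
      define A where "A = take n (drop i Cs)"
      define B where "B = take i Cs @ [a] @ drop (i + n) Cs"
      have A: "A \<in> obs C n" using Cs i unfolding A_def obs_def
        by (auto dest: in_set_takeD in_set_dropD)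
      have B: "B \<in> obs C m" using Cs i a unfolding B_def obs_def
        by (auto dest: in_set_takeD in_set_dropD)
      have A1: "[a] \<in> obs C 1" using a by (simp add: obs_def)
      note c = cores[OF lCs A_def B_def]
        note eq = R[rule_format, OF A B, unfolded dinatural_def, rule_format, OF A1 a b f]
      show "Comp C (plug_m \<delta> \<theta> i (length \<beta>) (length \<alpha>) Km Gm Fm
              (subst (map (Id C) Cs) (Id C a) f (i + k) (plug_ty \<delta> \<theta> i n \<tau> \<sigma>) (plug_var \<delta> \<theta> i \<beta> \<alpha>)))
             (Comp C (hcomp C i n \<sigma> Fo \<phi> \<gamma> \<eta> Hm \<delta> \<theta> Km \<psi> (Cs[i + k := a]))
               (plug_m \<gamma> \<eta> i (length \<alpha>) (length \<beta>) Hm Fm Gm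
                 (subst (map (Id C) Cs) f (Id C a) (i + k) (plug_ty \<gamma> \<eta> i n \<sigma> \<tau>) (plug_var \<gamma> \<eta> i \<alpha> \<beta>)))) =
            Comp C (plug_m \<delta> \<theta> i (length \<beta>) (length \<alpha>) Km Gm Fm
              (subst (map (Id C) Cs) f (Id C b) (i + k) (plug_ty \<delta> \<theta> i n \<tau> \<sigma>) (plug_var \<delta> \<theta> i \<beta> \<alpha>)))
             (Comp C (hcomp C i n \<sigma> Fo \<phi> \<gamma> \<eta> Hm \<delta> \<theta> Km \<psi> (Cs[i + k := b]))
               (plug_m \<gamma> \<eta> i (length \<alpha>) (length \<beta>) Hm Fm Gm
                 (subst (map (Id C) Cs) (Id C b) f (i + k) (plug_ty \<gamma> \<eta> i n \<sigma> \<tau>) (plug_var \<gamma> \<eta> i \<alpha> \<beta>))))"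
        using eq
        unfolding c(1)[where Ds="map (Id C) [a]"] c(2)[where Ds="map (Id C) [a]"]
        using c(3)[where L="[a]" and C=C and Fo=Fo and \<phi>=\<phi> and Hm=Hm and Km=Km and \<psi>=\<psi>]
          c(3)[where L="[b]" and C=C and Fo=Fo and \<phi>=\<phi> and Hm=Hm and Km=Km and \<psi>=\<psi>]
        by simp
    qed
  qed
qed

end
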